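(* Assume the standing setting in the context with $T=1$, and suppose that $\mathrm{NA}_2(\mathcal{P})$ holds, i.e. for every $\zeta\in\mathbb{R}^d$ (an $\mathcal{F}_0$-measurable, hence constant, vector), if $\zeta\in K_1$ $\mathcal{P}$-q.s. then $\zeta\in K_0$. Then for every $P\in\mathcal{P}$ and every $y\in\operatorname{Int}K_0^*$ there exist a probability $R\in\mathfrak{P}(\Omega_1)$ with $P\ll R\lll\mathcal{P}$ and a bounded $\mathcal{F}_1$-measurable $Y:\Omega_1\to\mathbb{R}^d$ with $Y(\omega)\in\operatorname{Int}K_1^*(\omega)$ for all $\omega$, such that $y=E^R[Y]$. In particular, $\mathrm{PCE}(\mathcal{P})$ holds, i.e.: for every $P\in\mathcal{P}$ and every $Y_0\in\operatorname{Int}K_0^*$ there exist $Q\in\mathfrak{P}(\Omega_1)$ and $Z_0\in\mathbb{R}^d$, $Z_1:\Omega_1\to\mathbb{R}^d$ $\mathcal{F}_1$-measurable with $P\ll Q\lll\mathcal{P}$, $Z_0=Y_0$, $Z_s\in\operatorname{Int}K_s^*$ $Q$-a.s. for $s=0,1$, and $E^Q[Z_1]=Z_0$.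
   Context: Setting (here $T=1$). $\Omega_1$ is a Polish space, $\Omega_0$ a singleton, $\mathcal{F}_1$ the universal completion of the Borel $\sigma$-field of $\Omega_1$, $\mathfrak{P}(\Omega_1)$ the Borel probability measures on $\Omega_1$. $\mathcal{P}=\mathcal{P}_0\subset\mathfrak{P}(\Omega_1)$ is a nonempty convex set which is analytic in $\mathfrak{P}(\Omega_1)$ (weak topology). A set is $\mathcal{P}$-polar if it is $P$-null for all $P\in\mathcal{P}$; "$\mathcal{P}$-q.s." means outside a $\mathcal{P}$-polar set. $R\lll\mathcal{P}$ means $R\ll R'$ for some $R'\in\mathcal{P}$. $K_0\subset\mathbb{R}^d$ is a closed convex cone containing $\mathbb{R}^d_+$, and $K_1:\Omega_1\to2^{\mathbb{R}^d}$ is a random set of closed convex cones containing $\mathbb{R}^d_+$ which is Borel-measurable ($\{\omega:K_1(\omega)\cap O\ne\emptyset\}$ Borel for each closed $O\subset\mathbb{R}^d$). $K_t^*(\omega):=\{y:\langle x,y\rangle\ge0\ \forall x\in K_t(\omega)\}$ is the dual cone. It is assumed for $t=0,1$ and all $\omega$: $K_t^*(\omega)\cap\partial\mathbb{R}^d_+=\{0\}$; $\operatorname{Int}K_t^*(\omega)\ne\emptyset$; and there is $c>0$ with $x^j/y^j\le c(x^i/y^i)$ for all $i,j$ and all $x,y\in K_t^*(\omega)\setminus\{0\}$. *)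

theory Defs
  imports "HOL-Probability.Probability"
begin

definition borel_probs :: "'a::topological_space measure set" where
  "borel_probs = {M. prob_space M \<and> sets M = sets borel}"

definition weak_topology :: "'a::topological_space measure topology" where
  "weak_topology = subtopology
     (topology_generated_by
        {{M. (\<integral>x. f x \<partial>M) \<in> U} | (f :: 'a \<Rightarrow> real) U.
            continuous_on UNIV f \<and> bounded (range f) \<and> open U})
     borel_probs"

definition analytic_probs :: "'a::topological_space measure set \<Rightarrow> bool" where
  "analytic_probs S \<longleftrightarrow> S = {} \<or>
     (\<exists>g :: (nat \<Rightarrow> nat) \<Rightarrow> 'a measure.
         continuous_map euclidean weak_topology g \<and> range g = S)"

definition univ_sets :: "'a::topological_space set set" where
  "univ_sets = {A. \<forall>\<mu>\<in>borel_probs. A \<in> sets (completion \<mu>)}"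

definition F1_measurable :: "('a::topological_space \<Rightarrow> 'b::topological_space) \<Rightarrow> bool" where
  "F1_measurable Y \<longleftrightarrow> (\<forall>B\<in>sets borel. Y -` B \<in> univ_sets)"

definition polar :: "'a measure set \<Rightarrow> 'a set \<Rightarrow> bool" where
  "polar \<P> N \<longleftrightarrow> (\<forall>P\<in>\<P>. N \<in> null_sets (completion P))"

definition qs :: "'a measure set \<Rightarrow> ('a \<Rightarrow> bool) \<Rightarrow> bool" where
  "qs \<P> \<phi> \<longleftrightarrow> polar \<P> {\<omega>. \<not> \<phi> \<omega>}"

definition dominated_by :: "'a measure \<Rightarrow> 'a measure set \<Rightarrow> bool" where
  "dominated_by R \<P> \<longleftrightarrow> (\<exists>R'\<in>\<P>. absolutely_continuous R' R)"

definition dual_cone :: "(real^'n::finite) set \<Rightarrow> (real^'n) set" where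
  "dual_cone K = {y. \<forall>x\<in>K. 0 \<le> x \<bullet> y}"


definition orthant :: "(real^'n::finite) set" where
  "orthant = {x. \<forall>i. 0 \<le> x $ i}"

definition solvency_cone :: "(real^'n::finite) set \<Rightarrow> bool" where
  "solvency_cone K \<longleftrightarrow> closed K \<and> convex K \<and> cone K \<and> orthant \<subseteq> K"

definition NA2 :: "'a measure set \<Rightarrow> (real^'n::finite) set \<Rightarrow> ('a \<Rightarrow> (real^'n) set) \<Rightarrow> bool" where
  "NA2 \<P> K0 K1 \<longleftrightarrow> (\<forall>\<zeta>. qs \<P> (\<lambda>\<omega>. \<zeta> \<in> K1 \<omega>) \<longrightarrow> \<zeta> \<in> K0)"

definition PCE :: "'a::topological_space measure set \<Rightarrow> (real^'n::finite) set \<Rightarrow> ('a \<Rightarrow> (real^'n) set) \<Rightarrow> bool" where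
  "PCE \<P> K0 K1 \<longleftrightarrow>
    (\<forall>P\<in>\<P>. \<forall>Y0\<in>interior (dual_cone K0).
       \<exists>Q Z0 Z1. Q \<in> borel_probs \<and> F1_measurable Z1 \<and>
         absolutely_continuous Q P \<and> dominated_by Q \<P> \<and> Z0 = Y0 \<and>
         Z0 \<in> interior (dual_cone K0) \<and>
         (AE \<omega> in completion Q. Z1 \<omega> \<in> interior (dual_cone (K1 \<omega>))) \<and>
         integrable (completion Q) Z1 \<and>
         (\<integral>\<omega>. Z1 \<omega> \<partial>completion Q) = Z0)"

end

theory Submission
  imports Defs
begin


lemma dual_int_pos:
  fixes K :: "(real^'n::finite) set"
  assumes "q \<in> interior (dual_cone K)" "x \<in> K" "x \<noteq> 0"
  shows "0 < x \<bullet> q"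
proof -
  obtain e where e: "e > 0" "ball q e \<subseteq> dual_cone K" using assms(1) mem_interior by blast
  define v where "v = q - ((e/2) / norm x) *\<^sub>R x"
  have "dist q v = e/2" using e assms(3) by (simp add: v_def dist_norm)
  hence "v \<in> dual_cone K" using e by auto
  hence "0 \<le> x \<bullet> v" using assms(2) by (auto simp: dual_cone_def)
  also have "x \<bullet> v = x \<bullet> q - (e/2) * norm x"
    using assms(3) by (simp add: v_def inner_diff_right dot_square_norm power2_eq_square)
  finally have "(e/2) * norm x \<le> x \<bullet> q" by simp
  moreover have "0 < (e/2) * norm x" using e assms(3) by simp
  ultimately show ?thesis by linarith
qed

lemma dual_int_iff:
  fixes K :: "(real^'n::finite) set"
  assumes "closed K" "cone K"
  shows "q \<in> interior (dual_cone K) \<longleftrightarrow> (\<forall>x\<in>K. x \<noteq> 0 \<longrightarrow> 0 < x \<bullet> q)"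
proof
  assume "q \<in> interior (dual_cone K)" thus "\<forall>x\<in>K. x \<noteq> 0 \<longrightarrow> 0 < x \<bullet> q"
    using dual_int_pos by blast
next
  assume pos: "\<forall>x\<in>K. x \<noteq> 0 \<longrightarrow> 0 < x \<bullet> q"
  let ?S = "K \<inter> sphere 0 1"
  have unit: "(1 / norm x) *\<^sub>R x \<in> ?S" if "x \<in> K" "x \<noteq> 0" for x
    using that assms(2) by (auto simp: cone_def)
  show "q \<in> interior (dual_cone K)"
  proof (cases "?S = {}")
    case True
    hence "K \<subseteq> {0}" using unit by blast
    hence "dual_cone K = UNIV" by (auto simp: dual_cone_def)
    thus ?thesis by simp
  next
    case False
    have "compact ?S" by (intro closed_Int_compact assms(1) compact_sphere)
    moreover have "continuous_on ?S (\<lambda>x. x \<bullet> q)" by (intro continuous_intros)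
    ultimately obtain x0 where x0: "x0 \<in> ?S" "\<And>y. y \<in> ?S \<Longrightarrow> x0 \<bullet> q \<le> y \<bullet> q"
      using continuous_attains_inf[OF _ False] by blast
    define m where "m = x0 \<bullet> q"
    have m: "m > 0" using x0 pos by (auto simp: m_def)
    have "ball q m \<subseteq> dual_cone K"
    proof
      fix v assume v: "v \<in> ball q m"
      show "v \<in> dual_cone K" unfolding dual_cone_def
      proof (intro CollectI ballI)
        fix x assume x: "x \<in> K"
        show "0 \<le> x \<bullet> v"
        proof (cases "x = 0")
          case False
          define x' where "x' = (1 / norm x) *\<^sub>R x"
          have x'S: "x' \<in> ?S" using unit x False by (simp add: x'_def)
          have "\<bar>x' \<bullet> (v - q)\<bar> \<le> norm x' * norm (v - q)" by (rule Cauchy_Schwarz_ineq2)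
          also have "\<dots> = dist q v" using x'S by (simp add: dist_norm norm_minus_commute)
          finally have "\<bar>x' \<bullet> (v - q)\<bar> < m" using v by simp
          moreover have "x' \<bullet> q \<ge> m" using x0(2)[OF x'S] by (simp add: m_def)
          ultimately have "0 < x' \<bullet> v" by (simp add: inner_diff_right)
          hence "0 < (1 / norm x) * (x \<bullet> v)" by (simp add: x'_def)
          thus ?thesis using False by (simp add: zero_less_divide_iff)
        qed simp
      qed
    qed
    thus ?thesis using m by (meson centre_in_ball interior_maximal open_ball subsetD)
  qed
qed



lemma int_char:
  fixes K :: "(real^'n::finite) set"
  assumes "solvency_cone K"
  shows "q \<in> interior (dual_cone K) \<longleftrightarrow> (\<forall>x\<in>K. x \<noteq> 0 \<longrightarrow> 0 < x \<bullet> q)"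
  using assms dual_int_iff unfolding solvency_cone_def by blast

lemma int_scale:
  fixes K :: "(real^'n::finite) set"
  assumes "solvency_cone K" "q \<in> interior (dual_cone K)" "c > 0"
  shows "c *\<^sub>R q \<in> interior (dual_cone K)"
  using assms by (simp add: int_char)

lemma int_add:
  fixes K :: "(real^'n::finite) set"
  assumes "solvency_cone K" "q \<in> interior (dual_cone K)" "p \<in> interior (dual_cone K)"
  shows "q + p \<in> interior (dual_cone K)"
  using assms by (simp add: int_char inner_add_right add_pos_pos)

lemma int_conv:
  fixes K :: "(real^'n::finite) set"
  assumes "solvency_cone K" "q \<in> interior (dual_cone K)" "p \<in> interior (dual_cone K)"
    and "0 \<le> s" "0 \<le> t" "s + t = 1"
  shows "s *\<^sub>R q + t *\<^sub>R p \<in> interior (dual_cone K)"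
proof (cases "s = 0")
  case True thus ?thesis using assms by simp
next
  case False
  hence "s > 0" using assms by simp
  show ?thesis
  proof (cases "t = 0")
    case True thus ?thesis using assms by simp
  next
    case False
    hence "t > 0" using assms by simp
    thus ?thesis using \<open>s > 0\<close> assms by (intro int_add int_scale) auto
  qed
qed

lemma not_in_K:
  fixes K :: "(real^'n::finite) set"
  assumes K: "solvency_cone K" and ne: "interior (dual_cone K) \<noteq> {}" and z: "z \<notin> K"
  shows "\<exists>q\<in>interior (dual_cone K). z \<bullet> q < 0"
proof -
  have cK: "convex K" "closed K" "cone K" using K by (auto simp: solvency_cone_def)
  obtain a b where ab: "a \<bullet> z < b" "\<forall>x\<in>K. a \<bullet> x > b"
    using separating_hyperplane_closed_point[OF cK(1,2) z] by blast
  have "0 \<in> K" using cK(3) K unfolding solvency_cone_def orthant_def by auto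
  hence b: "b < 0" using ab by auto
  have adual: "0 \<le> x \<bullet> a" if x: "x \<in> K" for x
  proof (rule ccontr)
    assume neg: "\<not> 0 \<le> x \<bullet> a"
    define c where "c = b / (x \<bullet> a)"
    have c: "c \<ge> 0" using neg b by (simp add: c_def divide_nonpos_neg)
    hence "c *\<^sub>R x \<in> K" using cK(3) x by (simp add: cone_def)
    hence "a \<bullet> (c *\<^sub>R x) > b" using ab by blast
    moreover have "a \<bullet> (c *\<^sub>R x) = b" using neg by (simp add: c_def inner_commute)
    ultimately show False by simp
  qed
  have az: "z \<bullet> a < 0" using ab b by (simp add: inner_commute)
  obtain w where w: "w \<in> interior (dual_cone K)" using ne by blast
  define d where "d = (if z \<bullet> w \<le> 0 then 1 else - (z \<bullet> a) / (2 * (z \<bullet> w)))"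
  have d: "d > 0" using az by (auto simp: d_def divide_neg_pos)
  have "d *\<^sub>R w \<in> interior (dual_cone K)" using int_scale[OF K w d] .
  hence "a + d *\<^sub>R w \<in> interior (dual_cone K)"
    using adual unfolding int_char[OF K] by (auto simp: inner_add_right add_nonneg_pos)
  moreover have "z \<bullet> (a + d *\<^sub>R w) < 0"
  proof (cases "z \<bullet> w \<le> 0")
    case True thus ?thesis using az by (simp add: d_def inner_add_right)
  next
    case False
    hence "d * (z \<bullet> w) = - (z \<bullet> a) / 2" by (simp add: d_def)
    thus ?thesis using az by (simp add: inner_add_right)
  qed
  ultimately show ?thesis by blast
qed



locale selctx =
  fixes K1 :: "'a::topological_space \<Rightarrow> (real^'d::finite) set"
    and u :: "nat \<Rightarrow> real^'d" and A :: "nat \<Rightarrow> 'a set"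
  assumes K1: "\<And>\<omega>. solvency_cone (K1 \<omega>)"
    and A_eq: "\<And>n. A n = {\<omega>. u n \<in> interior (dual_cone (K1 \<omega>))}"
    and A_meas: "\<And>n. A n \<in> sets borel"
    and u_norm: "\<And>n. norm (u n) \<le> 1"
    and A_cover: "\<And>\<omega>. \<exists>n. \<omega> \<in> A n"
    and u_sep: "\<And>\<omega> \<zeta>. \<zeta> \<notin> K1 \<omega> \<Longrightarrow> \<exists>n. \<omega> \<in> A n \<and> \<zeta> \<bullet> u n < 0"
begin

definition sel :: "('a \<Rightarrow> real^'d) \<Rightarrow> bool" where
  "sel Y \<longleftrightarrow> Y \<in> borel_measurable borel \<and> (\<exists>B. \<forall>\<omega>. norm (Y \<omega>) \<le> B) \<and>
     (\<forall>\<omega>. Y \<omega> \<in> interior (dual_cone (K1 \<omega>)))"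

definition Y0 :: "'a \<Rightarrow> real^'d" where
  "Y0 \<omega> = u (LEAST n. \<omega> \<in> A n)"

lemma Y0_meas: "Y0 \<in> borel_measurable borel"
proof -
  have "(\<lambda>\<omega>. LEAST n. \<omega> \<in> A n) \<in> measurable borel (count_space UNIV)"
  proof (rule measurable_Least)
    fix i show "(\<lambda>\<omega>. \<omega> \<in> A i) \<in> measurable borel (count_space UNIV)"
      unfolding pred_def using A_meas by simp
  qed
  moreover have "u \<in> measurable (count_space UNIV) borel" by simp
  ultimately show ?thesis unfolding Y0_def by (rule measurable_compose)
qed

lemma Y0_int: "Y0 \<omega> \<in> interior (dual_cone (K1 \<omega>))"
proof -
  have "\<omega> \<in> A (LEAST n. \<omega> \<in> A n)" using A_cover by (rule LeastI_ex)
  thus ?thesis unfolding Y0_def A_eq by simp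
qed

lemma sel_Y0: "sel Y0"
  unfolding sel_def using Y0_meas Y0_int u_norm unfolding Y0_def by blast

end



context selctx begin

lemma sel_integrable:
  assumes R: "R \<in> borel_probs" and Y: "sel Y"
  shows "integrable R Y"
proof -
  interpret prob_space R using R by (simp add: borel_probs_def)
  have sR: "sets R = sets borel" using R by (simp add: borel_probs_def)
  obtain B where B: "\<forall>\<omega>. norm (Y \<omega>) \<le> B" using Y by (auto simp: sel_def)
  have "Y \<in> borel_measurable R" using Y unfolding sel_def measurable_cong_sets[OF sR refl] by simp
  thus ?thesis using B by (intro integrable_const_bound[where B=B]) auto
qed

lemma aeK:
  assumes R: "R \<in> borel_probs" and \<zeta>g: "\<And>Y. sel Y \<Longrightarrow> 0 \<le> \<zeta> \<bullet> integral\<^sup>L R Y"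
  shows "AE \<omega> in R. \<zeta> \<in> K1 \<omega>"
proof -
  interpret prob_space R using R by (simp add: borel_probs_def)
  have sR: "sets R = sets borel" using R by (simp add: borel_probs_def)
  have int: "integrable R Y" if "sel Y" for Y using sel_integrable[OF R that] .
  define J where "J = {n. \<zeta> \<bullet> u n < 0}"
  have null: "A n \<in> null_sets R" if n: "n \<in> J" for n
  proof (rule ccontr)
    assume nn: "A n \<notin> null_sets R"
    have An: "A n \<in> sets R" using A_meas sR by simp
    define m where "m = measure R (A n)"
    have m: "m > 0"
    proof (rule ccontr)
      assume "\<not> m > 0"
      hence "m = 0" unfolding m_def using measure_nonneg[of R "A n"] by linarith
      hence "emeasure R (A n) = 0" unfolding m_def by (simp add: emeasure_eq_measure)
      thus False using nn An by (simp add: null_sets_def)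
    qed
    have un: "\<zeta> \<bullet> u n < 0" using n by (simp add: J_def)
    define g where "g = integral\<^sup>L R Y0"
    define \<epsilon> where "\<epsilon> = (- (m * (\<zeta> \<bullet> u n))) / (2 * (\<bar>\<zeta> \<bullet> g\<bar> + 1))"
    have \<epsilon>: "\<epsilon> > 0" unfolding \<epsilon>_def
      by (rule divide_pos_pos) (use m un mult_pos_neg[of m "\<zeta> \<bullet> u n"] in auto)
    define Y where "Y = (\<lambda>\<omega>. indicator (A n) \<omega> *\<^sub>R u n + \<epsilon> *\<^sub>R Y0 \<omega>)"
    have "sel Y" unfolding sel_def
    proof (intro conjI)
      show "Y \<in> borel_measurable borel" unfolding Y_def using Y0_meas A_meas
        by (auto intro!: borel_measurable_add borel_measurable_scaleR borel_measurable_indicator)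
      show "\<exists>B. \<forall>\<omega>. norm (Y \<omega>) \<le> B"
      proof (intro exI allI)
        fix \<omega>
        have "norm (Y \<omega>) \<le> norm (indicator (A n) \<omega> *\<^sub>R u n) + norm (\<epsilon> *\<^sub>R Y0 \<omega>)"
          unfolding Y_def by (rule norm_triangle_ineq)
        also have "\<dots> \<le> 1 + \<epsilon> * 1" using u_norm \<epsilon>
          by (intro add_mono) (auto simp: indicator_def Y0_def intro!: mult_left_mono)
        finally show "norm (Y \<omega>) \<le> 1 + \<epsilon> * 1" .
      qed
      show "\<forall>\<omega>. Y \<omega> \<in> interior (dual_cone (K1 \<omega>))"
      proof
        fix \<omega>
        have e: "\<epsilon> *\<^sub>R Y0 \<omega> \<in> interior (dual_cone (K1 \<omega>))"
          using int_scale[OF K1 Y0_int \<epsilon>] .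
        show "Y \<omega> \<in> interior (dual_cone (K1 \<omega>))"
        proof (cases "\<omega> \<in> A n")
          case True
          hence "u n \<in> interior (dual_cone (K1 \<omega>))" using A_eq by simp
          thus ?thesis using True e by (simp add: Y_def int_add[OF K1])
        next
          case False thus ?thesis using e by (simp add: Y_def)
        qed
      qed
    qed
    have IY: "integral\<^sup>L R Y = m *\<^sub>R u n + \<epsilon> *\<^sub>R g"
    proof -
      have fin: "emeasure R (A n) < \<top>" using emeasure_finite[of "A n"] less_top[of "emeasure R (A n)"] by blast
      have i0: "integrable R (indicator (A n) :: 'a \<Rightarrow> real)" using An fin by (auto simp: less_top intro!: integrable_real_indicator)
      have i1: "integrable R (\<lambda>\<omega>. indicator (A n) \<omega> *\<^sub>R u n)"
        using i0 by (intro integrable_scaleR_left)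
      have i2: "integrable R (\<lambda>\<omega>. \<epsilon> *\<^sub>R Y0 \<omega>)" using int[OF sel_Y0] by simp
      have sp: "space R = UNIV" using sets_eq_imp_space_eq[OF sR] by simp
      have "integral\<^sup>L R Y = integral\<^sup>L R (\<lambda>\<omega>. indicator (A n) \<omega> *\<^sub>R u n)
          + integral\<^sup>L R (\<lambda>\<omega>. \<epsilon> *\<^sub>R Y0 \<omega>)"
        unfolding Y_def by (rule Bochner_Integration.integral_add[OF i1 i2])
      also have "integral\<^sup>L R (\<lambda>\<omega>. indicator (A n) \<omega> *\<^sub>R u n) = integral\<^sup>L R (indicator (A n)) *\<^sub>R u n"
        by (rule integral_scaleR_left) (rule i0)
      also have "integral\<^sup>L R (indicator (A n) :: 'a \<Rightarrow> real) = m"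
        unfolding integral_indicator m_def by (simp add: sp)
      also have "integral\<^sup>L R (\<lambda>\<omega>. \<epsilon> *\<^sub>R Y0 \<omega>) = \<epsilon> *\<^sub>R g"
        unfolding g_def by (rule integral_scaleR_right)
      finally show ?thesis .
    qed
    have "0 \<le> \<zeta> \<bullet> integral\<^sup>L R Y" using \<zeta>g[OF \<open>sel Y\<close>] .
    also have "\<zeta> \<bullet> integral\<^sup>L R Y = m * (\<zeta> \<bullet> u n) + \<epsilon> * (\<zeta> \<bullet> g)"
      unfolding IY by (simp only: inner_add_right inner_scaleR_right)
    finally have "0 \<le> m * (\<zeta> \<bullet> u n) + \<epsilon> * (\<zeta> \<bullet> g)" .
    moreover have "\<epsilon> * (\<zeta> \<bullet> g) \<le> \<epsilon> * \<bar>\<zeta> \<bullet> g\<bar>" using \<epsilon> by (intro mult_left_mono) auto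
    moreover have "\<epsilon> * \<bar>\<zeta> \<bullet> g\<bar> < - (m * (\<zeta> \<bullet> u n))"
    proof -
      define p where "p = - (m * (\<zeta> \<bullet> u n))"
      define q where "q = \<bar>\<zeta> \<bullet> g\<bar>"
      have p: "p > 0" unfolding p_def using m un mult_pos_neg[of m "\<zeta> \<bullet> u n"] by linarith
      have q: "q \<ge> 0" unfolding q_def by simp
      have "\<epsilon> * q = p * (q / (2 * (q + 1)))" by (simp add: \<epsilon>_def p_def q_def)
      also have "q / (2 * (q + 1)) < 1" using q by (simp add: divide_less_eq)
      hence "p * (q / (2 * (q + 1))) < p * 1" using p by (intro mult_strict_left_mono)
      finally show ?thesis by (simp add: p_def q_def)
    qed
    ultimately show False by linarith
  qed
  have "(\<Union>n. if n \<in> J then A n else {}) \<in> null_sets R"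
    using null by (intro null_sets_UN) auto
  moreover have "{\<omega> \<in> space R. \<not> \<zeta> \<in> K1 \<omega>} \<subseteq> (\<Union>n. if n \<in> J then A n else {})"
  proof
    fix \<omega> assume "\<omega> \<in> {\<omega> \<in> space R. \<not> \<zeta> \<in> K1 \<omega>}"
    then obtain n where "\<omega> \<in> A n" "\<zeta> \<bullet> u n < 0" using u_sep by blast
    thus "\<omega> \<in> (\<Union>n. if n \<in> J then A n else {})" by (auto simp: J_def)
  qed
  ultimately show "AE \<omega> in R. \<zeta> \<in> K1 \<omega>" by (rule AE_I')
qed

lemma sepR:
  assumes R: "R \<in> borel_probs" and none: "\<not> (\<exists>Y. sel Y \<and> y = integral\<^sup>L R Y)"
  shows "\<exists>\<zeta>. norm \<zeta> = 1 \<and> \<zeta> \<bullet> y \<le> 0 \<and> (AE \<omega> in R. \<zeta> \<in> K1 \<omega>)"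
proof -
  interpret prob_space R using R by (simp add: borel_probs_def)
  have sR: "sets R = sets borel" using R by (simp add: borel_probs_def)
  define \<Gamma> where "\<Gamma> = {integral\<^sup>L R Y | Y. sel Y}"
  have int: "integrable R Y" if "sel Y" for Y using sel_integrable[OF R that] .
  have conv: "convex \<Gamma>"
    unfolding convex_def
  proof (intro ballI allI impI)
    fix x z :: "real^'d" and s t :: real
    assume "x \<in> \<Gamma>" "z \<in> \<Gamma>" and st: "0 \<le> s" "0 \<le> t" "s + t = 1"
    then obtain Y1 Y2 where Y: "sel Y1" "sel Y2" "x = integral\<^sup>L R Y1" "z = integral\<^sup>L R Y2"
      by (auto simp: \<Gamma>_def)
    define Y where "Y = (\<lambda>\<omega>. s *\<^sub>R Y1 \<omega> + t *\<^sub>R Y2 \<omega>)"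
    obtain B1 B2 where B: "\<forall>\<omega>. norm (Y1 \<omega>) \<le> B1" "\<forall>\<omega>. norm (Y2 \<omega>) \<le> B2"
      using Y by (auto simp: sel_def)
    have "\<forall>\<omega>. norm (Y \<omega>) \<le> s * B1 + t * B2"
    proof
      fix \<omega>
      have "norm (Y \<omega>) \<le> norm (s *\<^sub>R Y1 \<omega>) + norm (t *\<^sub>R Y2 \<omega>)"
        unfolding Y_def by (rule norm_triangle_ineq)
      also have "\<dots> \<le> s * B1 + t * B2" using B st
        by (auto intro!: add_mono mult_left_mono)
      finally show "norm (Y \<omega>) \<le> s * B1 + t * B2" .
    qed
    moreover have "Y \<in> borel_measurable borel" using Y unfolding Y_def sel_def
      by (auto intro!: borel_measurable_add borel_measurable_scaleR)
    moreover have "\<forall>\<omega>. Y \<omega> \<in> interior (dual_cone (K1 \<omega>))"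
      using Y st unfolding Y_def sel_def by (auto intro!: int_conv K1)
    ultimately have "sel Y" unfolding sel_def by blast
    moreover have "integral\<^sup>L R Y = s *\<^sub>R x + t *\<^sub>R z"
      unfolding Y_def using Y int by simp
    ultimately show "s *\<^sub>R x + t *\<^sub>R z \<in> \<Gamma>" unfolding \<Gamma>_def by force
  qed
  have cone: "c *\<^sub>R g \<in> \<Gamma>" if gG: "g \<in> \<Gamma>" and cpos: "c > 0" for g c
  proof -
    obtain Y where Y: "sel Y" "g = integral\<^sup>L R Y" using gG unfolding \<Gamma>_def by blast
    obtain B where B: "\<forall>\<omega>. norm (Y \<omega>) \<le> B" using Y by (auto simp: sel_def)
    have "sel (\<lambda>\<omega>. c *\<^sub>R Y \<omega>)" unfolding sel_def
    proof (intro conjI)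
      show "(\<lambda>\<omega>. c *\<^sub>R Y \<omega>) \<in> borel_measurable borel" using Y unfolding sel_def by (auto intro!: borel_measurable_scaleR)
      show "\<exists>B. \<forall>\<omega>. norm (c *\<^sub>R Y \<omega>) \<le> B"
        using B cpos by (intro exI[of _ "c * B"]) (auto intro: mult_left_mono)
      show "\<forall>\<omega>. c *\<^sub>R Y \<omega> \<in> interior (dual_cone (K1 \<omega>))"
        using Y cpos by (auto simp: sel_def intro: int_scale K1)
    qed
    moreover have "c *\<^sub>R g = integral\<^sup>L R (\<lambda>\<omega>. c *\<^sub>R Y \<omega>)" using Y by simp
    ultimately show ?thesis unfolding \<Gamma>_def by blast
  qed
  have g0: "integral\<^sup>L R Y0 \<in> \<Gamma>" using sel_Y0 by (auto simp: \<Gamma>_def)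
  have "0 \<notin> (+) (- y) ` \<Gamma>" using none by (auto simp: \<Gamma>_def)
  moreover have "convex ((+) (- y) ` \<Gamma>)" using conv by (rule convex_translation)
  ultimately obtain a where a: "a \<noteq> 0" "\<forall>x\<in>(+) (- y) ` \<Gamma>. 0 \<le> a \<bullet> x"
    using separating_hyperplane_set_0 by blast
  have a1: "a \<bullet> y \<le> a \<bullet> g" if "g \<in> \<Gamma>" for g
    using a(2) that by (auto simp: inner_diff_right)
  have a2: "0 \<le> a \<bullet> g" if g: "g \<in> \<Gamma>" for g
  proof (rule ccontr)
    assume neg: "\<not> 0 \<le> a \<bullet> g"
    define c where "c = (\<bar>a \<bullet> y\<bar> + 1) / - (a \<bullet> g)"
    have c: "c > 0" unfolding c_def by (rule divide_pos_pos) (use neg in auto)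
    have "a \<bullet> y \<le> a \<bullet> (c *\<^sub>R g)" using a1 cone[OF g c] .
    also have "a \<bullet> (c *\<^sub>R g) = - (\<bar>a \<bullet> y\<bar> + 1)" using neg by (simp add: c_def)
    finally show False by simp
  qed
  have a3: "a \<bullet> y \<le> 0"
  proof (rule ccontr)
    assume pos: "\<not> a \<bullet> y \<le> 0"
    define g where "g = integral\<^sup>L R Y0"
    define c where "c = (a \<bullet> y) / (2 * (\<bar>a \<bullet> g\<bar> + 1))"
    have c: "c > 0" using pos by (simp add: c_def)
    have "a \<bullet> y \<le> a \<bullet> (c *\<^sub>R g)" using a1[OF cone[OF g0 c]] by (simp add: g_def)
    also have "\<dots> = c * (a \<bullet> g)" by simp
    also have "\<dots> \<le> c * \<bar>a \<bullet> g\<bar>" using c by (intro mult_left_mono) auto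
    also have "\<dots> < a \<bullet> y"
    proof -
      have "c * \<bar>a \<bullet> g\<bar> = (a \<bullet> y) * (\<bar>a \<bullet> g\<bar> / (2 * (\<bar>a \<bullet> g\<bar> + 1)))"
        by (simp add: c_def)
      also have "\<dots> < (a \<bullet> y) * 1"
        using pos by (intro mult_strict_left_mono) (auto simp: divide_less_eq)
      finally show ?thesis by simp
    qed
    finally show False by simp
  qed
  define \<zeta> where "\<zeta> = (1 / norm a) *\<^sub>R a"
  have \<zeta>1: "norm \<zeta> = 1" using a by (simp add: \<zeta>_def)
  have \<zeta>y: "\<zeta> \<bullet> y \<le> 0" using a3 by (simp add: \<zeta>_def divide_nonpos_nonneg)
  have \<zeta>g: "0 \<le> \<zeta> \<bullet> g" if "g \<in> \<Gamma>" for g using a2[OF that] by (simp add: \<zeta>_def)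
  have "AE \<omega> in R. \<zeta> \<in> K1 \<omega>"
    using aeK[OF R] \<zeta>g unfolding \<Gamma>_def by blast
  thus ?thesis using \<zeta>1 \<zeta>y by blast
qed

end



lemma exists_ctx:
  fixes K1 :: "'a::topological_space \<Rightarrow> (real^'d::finite) set"
  assumes K1: "\<And>\<omega>. solvency_cone (K1 \<omega>)"
    and K1_meas: "\<And>C. closed C \<Longrightarrow> {\<omega>. K1 \<omega> \<inter> C \<noteq> {}} \<in> sets borel"
    and K1_int: "\<And>\<omega>. interior (dual_cone (K1 \<omega>)) \<noteq> {}"
  shows "\<exists>u A. selctx K1 u A"
proof -
  obtain D :: "(real^'d) set"
    where D: "countable D" "\<And>X. open X \<Longrightarrow> X \<noteq> {} \<Longrightarrow> \<exists>d\<in>D. d \<in> X"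
    using countable_dense_setE by auto
  have Dne: "D \<noteq> {}" using D(2)[of UNIV] by auto
  define q where "q = from_nat_into D"
  have rq: "range q = D" using Dne D(1) by (simp add: q_def)
  define u where "u n = (1 / norm (q n)) *\<^sub>R q n" for n
  define A where "A n = {\<omega>. u n \<in> interior (dual_cone (K1 \<omega>))}" for n
  have u_norm: "norm (u n) \<le> 1" for n
    by (cases "q n = 0") (auto simp: u_def)
  have u_int: "u n \<in> interior (dual_cone (K1 \<omega>))" if "q n \<in> interior (dual_cone (K1 \<omega>))" for n \<omega>
  proof (cases "q n = 0")
    case True thus ?thesis using that by (simp add: u_def)
  next
    case False thus ?thesis unfolding u_def using that by (intro int_scale K1) auto
  qed
  have dense: "\<exists>n. q n \<in> X" if "open X" "X \<noteq> {}" for X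
    using D(2)[OF that] rq by blast
  have A_meas: "A n \<in> sets borel" for n
  proof -
    define C where "C = {x :: real^'d. norm x = 1 \<and> x \<bullet> u n \<le> 0}"
    have "C = sphere 0 1 \<inter> {x. inner (u n) x \<le> 0}" by (auto simp: C_def inner_commute)
    hence cC: "closed C" by (simp add: closed_Int closed_halfspace_le)
    have "A n = UNIV - {\<omega>. K1 \<omega> \<inter> C \<noteq> {}}"
    proof (intro set_eqI iffI)
      fix \<omega> assume "\<omega> \<in> A n"
      hence "\<forall>x\<in>K1 \<omega>. x \<noteq> 0 \<longrightarrow> 0 < x \<bullet> u n" unfolding A_def int_char[OF K1] by simp
      thus "\<omega> \<in> UNIV - {\<omega>. K1 \<omega> \<inter> C \<noteq> {}}" by (fastforce simp: C_def)
    next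
      fix \<omega> assume w: "\<omega> \<in> UNIV - {\<omega>. K1 \<omega> \<inter> C \<noteq> {}}"
      have "0 < x \<bullet> u n" if x: "x \<in> K1 \<omega>" "x \<noteq> 0" for x
      proof (rule ccontr)
        assume neg: "\<not> 0 < x \<bullet> u n"
        have "(1 / norm x) *\<^sub>R x \<in> K1 \<omega>" using K1[of \<omega>] x unfolding solvency_cone_def cone_def by simp
        moreover have "norm ((1 / norm x) *\<^sub>R x) = 1" using x by simp
        moreover have "((1 / norm x) *\<^sub>R x) \<bullet> u n \<le> 0" using neg by (simp add: divide_nonpos_nonneg)
        ultimately show False using w by (auto simp: C_def)
      qed
      thus "\<omega> \<in> A n" unfolding A_def int_char[OF K1] by simp
    qed
    moreover have "UNIV - {\<omega>. K1 \<omega> \<inter> C \<noteq> {}} \<in> sets borel"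
      using sets.compl_sets[OF K1_meas[OF cC]] by simp
    ultimately show ?thesis by simp
  qed
  have A_cover: "\<exists>n. \<omega> \<in> A n" for \<omega>
  proof -
    obtain n where "q n \<in> interior (dual_cone (K1 \<omega>))" using dense[OF open_interior K1_int] by blast
    thus ?thesis using u_int by (auto simp: A_def)
  qed
  have u_sep: "\<exists>n. \<omega> \<in> A n \<and> \<zeta> \<bullet> u n < 0" if z: "\<zeta> \<notin> K1 \<omega>" for \<omega> \<zeta>
  proof -
    obtain y where y: "y \<in> interior (dual_cone (K1 \<omega>))" "\<zeta> \<bullet> y < 0"
      using not_in_K[OF K1 K1_int z] by blast
    let ?X = "interior (dual_cone (K1 \<omega>)) \<inter> {v. inner \<zeta> v < 0}"
    have "open ?X" by (intro open_Int open_interior open_halfspace_lt)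
    moreover have "?X \<noteq> {}" using y by auto
    ultimately obtain n where n: "q n \<in> ?X" using dense by blast
    hence qn: "q n \<noteq> 0" by auto
    have "\<zeta> \<bullet> u n = (\<zeta> \<bullet> q n) / norm (q n)" by (simp add: u_def)
    also have "\<dots> < 0" using n qn by (simp add: divide_neg_pos)
    finally show ?thesis using n u_int by (auto simp: A_def)
  qed
  have "selctx K1 u A"
    by (unfold_locales) (use K1 A_meas u_norm A_cover u_sep in \<open>auto simp: A_def\<close>)
  thus ?thesis by blast
qed



lemma ac_AE:
  assumes M: "M \<in> borel_probs" and R: "R \<in> borel_probs" and ac: "absolutely_continuous M R"
    and ae: "AE x in M. P x"
  shows "AE x in R. P x"
proof -
  obtain N where N: "N \<in> null_sets M" "{x \<in> space M. \<not> P x} \<subseteq> N" using ae unfolding eventually_ae_filter by blast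
  have "space M = space borel" by (rule sets_eq_imp_space_eq) (use M in \<open>simp add: borel_probs_def\<close>)
  moreover have "space R = space borel" by (rule sets_eq_imp_space_eq) (use R in \<open>simp add: borel_probs_def\<close>)
  ultimately have "space M = space R" by simp
  moreover have "N \<in> null_sets R" using N ac by (auto simp: absolutely_continuous_def)
  ultimately show ?thesis using N by (intro AE_I'[of N]) auto
qed

lemma mix_ac:
  assumes M: "M \<in> borel_probs" and P1: "P1 \<in> borel_probs"
    and eq: "\<forall>A\<in>sets borel. measure M A = t * measure P1 A + (1 - t) * measure P2 A"
    and t: "0 < t" "t \<le> 1" and P2: "P2 \<in> borel_probs"
  shows "absolutely_continuous M P1"
  unfolding absolutely_continuous_def
proof
  fix N assume N: "N \<in> null_sets M"
  interpret M: prob_space M using M by (simp add: borel_probs_def)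
  interpret P1: prob_space P1 using P1 by (simp add: borel_probs_def)
  have sN: "N \<in> sets borel" using null_setsD2[OF N] M by (simp add: borel_probs_def)
  have "measure M N = 0" using null_setsD1[OF N] by (simp add: measure_def)
  hence "t * measure P1 N + (1 - t) * measure P2 N = 0" using eq sN by simp
  moreover have "0 \<le> (1 - t) * measure P2 N" using t by simp
  moreover have "0 \<le> t * measure P1 N" using t by simp
  ultimately have "t * measure P1 N = 0" by linarith
  hence "measure P1 N = 0" using t by simp
  hence "emeasure P1 N = 0" by (simp add: P1.emeasure_eq_measure)
  moreover have "N \<in> sets P1" using sN P1 by (simp add: borel_probs_def)
  ultimately show "N \<in> null_sets P1" by (simp add: null_sets_def)
qed

lemma dom_finite:
  assumes mix: "\<And>R1 R2. R1 \<in> S \<Longrightarrow> R2 \<in> S \<Longrightarrow> \<exists>M\<in>S. absolutely_continuous M R1 \<and> absolutely_continuous M R2"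
    and P: "P \<in> S" and fin: "finite F" and sub: "F \<subseteq> S"
  shows "\<exists>M\<in>S. \<forall>R\<in>F. absolutely_continuous M R"
  using fin sub
proof (induction F rule: finite_induct)
  case empty thus ?case using P by blast
next
  case (insert x F)
  then obtain M where M: "M \<in> S" "\<forall>R\<in>F. absolutely_continuous M R" by blast
  obtain M' where M': "M' \<in> S" "absolutely_continuous M' M" "absolutely_continuous M' x"
    using mix[OF M(1)] insert by blast
  have "\<forall>R\<in>insert x F. absolutely_continuous M' R"
    using M M' unfolding absolutely_continuous_def by blast
  thus ?case using M' by blast
qed



theorem proposition3p1:
  fixes \<P> :: "'a::polish_space measure set"
    and K0 :: "(real^'d::finite) set"
    and K1 :: "'a \<Rightarrow> (real^'d) set"
  assumes P_sub: "\<P> \<subseteq> borel_probs"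
    and P_ne: "\<P> \<noteq> {}"
    and P_convex: "\<And>P Q (t::real). P \<in> \<P> \<Longrightarrow> Q \<in> \<P> \<Longrightarrow> 0 \<le> t \<Longrightarrow> t \<le> 1 \<Longrightarrow>
        \<exists>M\<in>\<P>. \<forall>A\<in>sets borel. measure M A = t * measure P A + (1 - t) * measure Q A"
    and P_analytic: "analytic_probs \<P>"
    and K0: "solvency_cone K0"
    and K1: "\<And>\<omega>. solvency_cone (K1 \<omega>)"
    and K1_meas: "\<And>C. closed C \<Longrightarrow> {\<omega>. K1 \<omega> \<inter> C \<noteq> {}} \<in> sets borel"
    and K0_bd: "dual_cone K0 \<inter> frontier orthant = {0}"
    and K1_bd: "\<And>\<omega>. dual_cone (K1 \<omega>) \<inter> frontier orthant = {0}"
    and K0_int: "interior (dual_cone K0) \<noteq> {}"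
    and K1_int: "\<And>\<omega>. interior (dual_cone (K1 \<omega>)) \<noteq> {}"
    and ratio: "\<exists>c>0.
        (\<forall>x\<in>dual_cone K0 - {0}. \<forall>y\<in>dual_cone K0 - {0}. \<forall>i j.
            x $ j / y $ j \<le> c * (x $ i / y $ i)) \<and>
        (\<forall>\<omega>. \<forall>x\<in>dual_cone (K1 \<omega>) - {0}. \<forall>y\<in>dual_cone (K1 \<omega>) - {0}. \<forall>i j.
            x $ j / y $ j \<le> c * (x $ i / y $ i))"
    and NA2: "NA2 \<P> K0 K1"
  shows "(\<forall>P\<in>\<P>. \<forall>y\<in>interior (dual_cone K0).
            \<exists>R Y. R \<in> borel_probs \<and> absolutely_continuous R P \<and> dominated_by R \<P> \<and>
              F1_measurable Y \<and> bounded (range Y) \<and>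
              (\<forall>\<omega>. Y \<omega> \<in> interior (dual_cone (K1 \<omega>))) \<and>
              y = (\<integral>\<omega>. Y \<omega> \<partial>completion R))
         \<and> PCE \<P> K0 K1"
proof -
  obtain u A where ctx: "selctx K1 u A" using exists_ctx[OF K1 K1_meas K1_int] by blast
  interpret selctx K1 u A by (rule ctx)
  have Pb: "R \<in> borel_probs" if "R \<in> \<P>" for R using P_sub that by blast
  have mix: "\<exists>M\<in>\<P>. absolutely_continuous M P1 \<and> absolutely_continuous M P2"
    if P12: "P1 \<in> \<P>" "P2 \<in> \<P>" for P1 P2
  proof -
    obtain M where M: "M \<in> \<P>"
      and eq: "\<forall>A\<in>sets borel. measure M A = (1/2) * measure P1 A + (1 - 1/2) * measure P2 A"
      using P_convex[OF P12, of "1/2"] by auto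
    have eq2: "\<forall>A\<in>sets borel. measure M A = (1/2) * measure P2 A + (1 - 1/2) * measure P1 A"
      using eq by (auto simp: algebra_simps)
    have "absolutely_continuous M P1"
      by (rule mix_ac[OF Pb[OF M] Pb[OF P12(1)] eq _ _ Pb[OF P12(2)]]) auto
    moreover have "absolutely_continuous M P2"
      by (rule mix_ac[OF Pb[OF M] Pb[OF P12(2)] eq2 _ _ Pb[OF P12(1)]]) auto
    ultimately show ?thesis using M by blast
  qed
  have key: "\<exists>R Y. R \<in> \<P> \<and> absolutely_continuous R P \<and> sel Y \<and> y = integral\<^sup>L R Y"
    if P: "P \<in> \<P>" and y: "y \<in> interior (dual_cone K0)" for P y
  proof (rule ccontr)
    assume no: "\<not> (\<exists>R Y. R \<in> \<P> \<and> absolutely_continuous R P \<and> sel Y \<and> y = integral\<^sup>L R Y)"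
    define S where "S = {R \<in> \<P>. absolutely_continuous R P}"
    have noR: "\<not> (\<exists>Y. sel Y \<and> y = integral\<^sup>L R Y)" if "R \<in> S" for R
      using no that by (auto simp: S_def)
    have mixS: "\<exists>M\<in>S. absolutely_continuous M R1 \<and> absolutely_continuous M R2"
      if R12: "R1 \<in> S" "R2 \<in> S" for R1 R2
    proof -
      obtain M where M: "M \<in> \<P>" "absolutely_continuous M R1" "absolutely_continuous M R2"
        using mix[of R1 R2] R12 by (auto simp: S_def)
      have "absolutely_continuous M P" using M(2) R12(1)
        unfolding S_def absolutely_continuous_def by blast
      thus ?thesis using M by (auto simp: S_def)
    qed
    have PS: "P \<in> S" using P by (simp add: S_def absolutely_continuous_def)
    define W where "W R = {\<zeta>. AE \<omega> in R. \<zeta> \<in> K1 \<omega>}" for R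
    define Sc where "Sc = sphere (0::real^'d) 1 \<inter> {\<zeta>. inner y \<zeta> \<le> 0}"
    have cSc: "compact Sc" unfolding Sc_def
      by (intro compact_Int_closed compact_sphere closed_halfspace_le)
    have closedW: "closed (W R)" for R
      unfolding closed_sequential_limits
    proof (intro allI impI)
      fix x l assume xl: "(\<forall>n. x n \<in> W R) \<and> x \<longlonglongrightarrow> l"
      hence "AE \<omega> in R. \<forall>n. x n \<in> K1 \<omega>" unfolding AE_all_countable W_def by simp
      hence "AE \<omega> in R. l \<in> K1 \<omega>"
      proof (rule eventually_mono)
        fix \<omega> assume "\<forall>n. x n \<in> K1 \<omega>"
        moreover have "closed (K1 \<omega>)" using K1 by (simp add: solvency_cone_def)
        ultimately show "l \<in> K1 \<omega>" using xl closed_sequentially by blast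
      qed
      thus "l \<in> W R" by (simp add: W_def)
    qed
    have "Sc \<inter> \<Inter>(W ` S) \<noteq> {}"
    proof (rule compact_imp_fip[OF cSc])
      show "closed T" if "T \<in> W ` S" for T using that closedW by blast
    next
      fix F' assume F': "finite F'" "F' \<subseteq> W ` S"
      then obtain S' where S': "S' \<subseteq> S" "finite S'" "F' = W ` S'"
        using finite_subset_image by metis
      obtain M where M: "M \<in> S" "\<forall>R\<in>S'. absolutely_continuous M R"
        using dom_finite[OF mixS PS S'(2,1)] by blast
      have MP: "M \<in> \<P>" using M by (simp add: S_def)
      obtain \<zeta> where z: "norm \<zeta> = 1" "\<zeta> \<bullet> y \<le> 0" "AE \<omega> in M. \<zeta> \<in> K1 \<omega>"
        using sepR[OF Pb[OF MP] noR[OF M(1)]] by blast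
      have "\<zeta> \<in> W R" if "R \<in> S'" for R
      proof -
        have "R \<in> \<P>" using that S' by (auto simp: S_def)
        thus ?thesis using ac_AE[OF Pb[OF MP] Pb _ z(3)] M(2) that by (simp add: W_def)
      qed
      moreover have "\<zeta> \<in> Sc" using z by (simp add: Sc_def inner_commute)
      ultimately show "Sc \<inter> \<Inter>F' \<noteq> {}" using S'(3) by blast
    qed
    then obtain \<zeta> where z: "\<zeta> \<in> Sc" "\<And>R. R \<in> S \<Longrightarrow> \<zeta> \<in> W R" by blast
    have "qs \<P> (\<lambda>\<omega>. \<zeta> \<in> K1 \<omega>)"
      unfolding qs_def polar_def
    proof
      fix P' assume P': "P' \<in> \<P>"
      obtain M where M: "M \<in> \<P>" "absolutely_continuous M P" "absolutely_continuous M P'"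
        using mix[OF P P'] by blast
      have "M \<in> S" using M by (simp add: S_def)
      hence "AE \<omega> in M. \<zeta> \<in> K1 \<omega>" using z(2) by (simp add: W_def)
      hence ae: "AE \<omega> in P'. \<zeta> \<in> K1 \<omega>" using ac_AE[OF Pb[OF M(1)] Pb[OF P'] M(3)] by blast
      define N where "N = {\<omega>. \<not> \<zeta> \<in> K1 \<omega>}"
      have "N = UNIV - {\<omega>. K1 \<omega> \<inter> {\<zeta>} \<noteq> {}}" by (auto simp: N_def)
      moreover have "UNIV - {\<omega>. K1 \<omega> \<inter> {\<zeta>} \<noteq> {}} \<in> sets borel"
        using sets.compl_sets[OF K1_meas[OF closed_singleton]] by simp
      ultimately have Nb: "N \<in> sets borel" by simp
      have sP': "sets P' = sets borel" using Pb[OF P'] by (simp add: borel_probs_def)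
      have spP': "space P' = UNIV" using sets_eq_imp_space_eq[OF sP'] by simp
      have NP': "N \<in> sets P'" using Nb sP' by simp
      have "emeasure P' N = 0"
        using ae AE_iff_measurable[OF NP', of "\<lambda>\<omega>. \<zeta> \<in> K1 \<omega>"] spP' by (simp add: N_def)
      hence "N \<in> null_sets P'" using NP' by (simp add: null_sets_def)
      thus "{\<omega>. \<not> \<zeta> \<in> K1 \<omega>} \<in> null_sets (completion P')"
        unfolding N_def[symmetric] by (rule null_sets_completionI)
    qed
    hence zK0: "\<zeta> \<in> K0" using NA2 by (simp add: NA2_def)
    have "\<zeta> \<noteq> 0" using z(1) by (auto simp: Sc_def)
    hence "0 < \<zeta> \<bullet> y" using dual_int_pos[OF y zK0] by simp
    moreover have "inner y \<zeta> \<le> 0" using z(1) by (simp add: Sc_def)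
    ultimately show False by (simp add: inner_commute)
  qed
  have F1: "F1_measurable Y" if "sel Y" for Y
    unfolding F1_measurable_def univ_sets_def
  proof (intro ballI CollectI)
    fix B :: "(real^'d) set" and \<mu> :: "'a measure" assume B: "B \<in> sets borel" and \<mu>: "\<mu> \<in> borel_probs"
    have "Y -` B \<inter> space borel \<in> sets borel"
      using that B unfolding sel_def by (intro measurable_sets) auto
    hence "Y -` B \<in> sets \<mu>" using \<mu> by (simp add: borel_probs_def)
    thus "Y -` B \<in> sets (completion \<mu>)" by simp
  qed
  have bnd: "bounded (range Y)" if "sel Y" for Y
    using that unfolding sel_def bounded_iff by blast
  have meas: "Y \<in> borel_measurable R" if "sel Y" "R \<in> \<P>" for Y R
    using that Pb[OF that(2)] unfolding sel_def borel_probs_def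
    by (simp add: measurable_cong_sets[of R borel borel borel])
  have domP: "dominated_by R \<P>" if "R \<in> \<P>" for R
    using that unfolding dominated_by_def absolutely_continuous_def by blast
  have part1: "\<forall>P\<in>\<P>. \<forall>y\<in>interior (dual_cone K0).
            \<exists>R Y. R \<in> borel_probs \<and> absolutely_continuous R P \<and> dominated_by R \<P> \<and>
              F1_measurable Y \<and> bounded (range Y) \<and>
              (\<forall>\<omega>. Y \<omega> \<in> interior (dual_cone (K1 \<omega>))) \<and>
              y = (\<integral>\<omega>. Y \<omega> \<partial>completion R)"
  proof (intro ballI)
    fix P y assume P: "P \<in> \<P>" and y: "y \<in> interior (dual_cone K0)"
    obtain R Y where RY: "R \<in> \<P>" "absolutely_continuous R P" "sel Y" "y = integral\<^sup>L R Y"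
      using key[OF P y] by blast
    have "(\<integral>\<omega>. Y \<omega> \<partial>completion R) = integral\<^sup>L R Y"
      using integral_completion[OF meas[OF RY(3,1)]] by simp
    thus "\<exists>R Y. R \<in> borel_probs \<and> absolutely_continuous R P \<and> dominated_by R \<P> \<and>
              F1_measurable Y \<and> bounded (range Y) \<and>
              (\<forall>\<omega>. Y \<omega> \<in> interior (dual_cone (K1 \<omega>))) \<and>
              y = (\<integral>\<omega>. Y \<omega> \<partial>completion R)"
      using RY Pb[OF RY(1)] domP[OF RY(1)] F1[OF RY(3)] bnd[OF RY(3)]
      by (intro exI[of _ R] exI[of _ Y]) (auto simp: sel_def)
  qed
  have part2: "PCE \<P> K0 K1"
    unfolding PCE_def
  proof (intro ballI)
    fix P Y0 assume P: "P \<in> \<P>" and y: "Y0 \<in> interior (dual_cone K0)"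
    obtain R Y where RY: "R \<in> \<P>" "absolutely_continuous R P" "sel Y" "Y0 = integral\<^sup>L R Y"
      using key[OF P y] by blast
    have "(\<integral>\<omega>. Y \<omega> \<partial>completion R) = integral\<^sup>L R Y"
      using integral_completion[OF meas[OF RY(3,1)]] by simp
    moreover have "integrable (completion R) Y"
      using integrable_completion[OF meas[OF RY(3,1)]] sel_integrable[OF Pb[OF RY(1)] RY(3)] by simp
    moreover have "AE \<omega> in completion R. Y \<omega> \<in> interior (dual_cone (K1 \<omega>))"
      using RY(3) by (simp add: sel_def)
    ultimately show "\<exists>Q Z0 Z1. Q \<in> borel_probs \<and> F1_measurable Z1 \<and>
         absolutely_continuous Q P \<and> dominated_by Q \<P> \<and> Z0 = Y0 \<and>
         Z0 \<in> interior (dual_cone K0) \<and>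
         (AE \<omega> in completion Q. Z1 \<omega> \<in> interior (dual_cone (K1 \<omega>))) \<and>
         integrable (completion Q) Z1 \<and>
         (\<integral>\<omega>. Z1 \<omega> \<partial>completion Q) = Z0"
      using RY Pb[OF RY(1)] domP[OF RY(1)] F1[OF RY(3)] y
      by (intro exI[of _ R] exI[of _ Y0] exI[of _ Y]) auto
  qed
  show ?thesis using part1 part2 by blast
qed


end
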